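(* Let $k \geq \ell \ge 1$, $n \geq k+\ell$, and let $\mathcal F \subset \binom{[n]}{k}$, $\mathcal G \subset \binom{[n]}{\ell}$ be initial, cross-intersecting families. For $G \in \mathcal G$ let $p(G)$ be the largest integer $p \in \{0,1,\dots,\ell\}$ such that $|G \cap [2p+k-\ell]| \geq p$. Assume that if $k=\ell$ then $p(G) \geq 1$ for all $G \in \mathcal G$. Define $\varphi(G) = G \,\Delta\, [2p(G)+k-\ell]$ (symmetric difference). Then: (i) $|\varphi(G)| = k$ for all $G \in \mathcal G$; (ii) $\varphi$ is injective on $\mathcal G$ and $\varphi(G) \notin \mathcal F$ for all $G \in \mathcal G$; (iii) $\varphi(G) \cap [\ell] \neq \emptyset$ for every $G \in \mathcal G$ with $G \neq [\ell]$.
   Context: $[m]=\{1,\dots,m\}$ ($[0]=\emptyset$). For $r$-sets $A=\{x_1<\dots<x_r\}$, $B=\{y_1<\dots<y_r\}$, $A\prec B$ means $x_i\le y_i$ for all $i$; a family of $r$-sets is initial if $A\prec B\in\mathcal F$ implies $A\in\mathcal F$. Families are cross-intersecting if every member of one meets every member of the other. *)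

theory Defs
  imports Main
begin

definition rsets :: "nat \<Rightarrow> nat \<Rightarrow> nat set set" where
  "rsets n r = {A. A \<subseteq> {1..n} \<and> card A = r}"

definition shift_prec :: "nat set \<Rightarrow> nat set \<Rightarrow> bool" where
  "shift_prec A B \<longleftrightarrow> finite A \<and> finite B \<and> card A = card B \<and>
     (\<forall>i < card A. sorted_list_of_set A ! i \<le> sorted_list_of_set B ! i)"

definition initial :: "nat \<Rightarrow> nat \<Rightarrow> nat set set \<Rightarrow> bool" where
  "initial n r F \<longleftrightarrow> (\<forall>A B. A \<in> rsets n r \<and> B \<in> F \<and> shift_prec A B \<longrightarrow> A \<in> F)"

definition cross_intersecting :: "'a set set \<Rightarrow> 'a set set \<Rightarrow> bool" where
  "cross_intersecting F G \<longleftrightarrow> (\<forall>A\<in>F. \<forall>B\<in>G. A \<inter> B \<noteq> {})"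

definition pG :: "nat \<Rightarrow> nat \<Rightarrow> nat set \<Rightarrow> nat" where
  "pG k l G = Max {p. p \<le> l \<and> card (G \<inter> {1..2*p+k-l}) \<ge> p}"

definition phi :: "nat \<Rightarrow> nat \<Rightarrow> nat set \<Rightarrow> nat set" where
  "phi k l G = (let S = {1..2 * pG k l G + k - l} in (G - S) \<union> (S - G))"

end

theory Submission
  imports Defs
begin

lemma shift_crit:
  assumes fa: "finite A" and fb: "finite B" and cab: "card A = card B"
    and le: "\<And>s. card (B \<inter> {..s}) \<le> card (A \<inter> {..s})"
  shows "shift_prec A B"
proof -
  define xs where "xs = sorted_list_of_set A"
  define ys where "ys = sorted_list_of_set B"
  have lx: "length xs = card A" and ly: "length ys = card B" by (simp_all add: xs_def ys_def)
  have sx: "sorted xs" "distinct xs" "set xs = A" using fa by (auto simp: xs_def)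
  have sy: "sorted ys" "distinct ys" "set ys = B" using fb by (auto simp: ys_def)
  have "xs ! i \<le> ys ! i" if i: "i < card A" for i
  proof -
    let ?b = "ys ! i"
    have sub: "(\<lambda>j. ys ! j) ` {..i} \<subseteq> B \<inter> {..?b}"
    proof
      fix y assume "y \<in> (\<lambda>j. ys ! j) ` {..i}"
      then obtain j where j: "j \<le> i" "y = ys ! j" by auto
      have "ys ! j \<in> set ys" using j i ly cab by auto
      moreover have "ys ! j \<le> ys ! i" using sorted_nth_mono[OF sy(1) j(1)] i ly cab by auto
      ultimately show "y \<in> B \<inter> {..?b}" using j sy by auto
    qed
    have inj: "inj_on (\<lambda>j. ys ! j) {..i}"
      using sy(2) i ly cab by (auto simp: inj_on_def nth_eq_iff_index_eq)
    have "card ((\<lambda>j. ys ! j) ` {..i}) = Suc i" using card_image[OF inj] by simp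
    hence "Suc i \<le> card (B \<inter> {..?b})" using card_mono[OF _ sub] fb by (metis finite_Int)
    hence c: "Suc i \<le> card (A \<inter> {..?b})" using le[of ?b] by linarith
    show ?thesis
    proof (rule ccontr)
      assume "\<not> ?thesis"
      hence lt: "?b < xs ! i" by simp
      have "A \<inter> {..?b} \<subseteq> (\<lambda>j. xs ! j) ` {..<i}"
      proof
        fix y assume y: "y \<in> A \<inter> {..?b}"
        then obtain j where j: "j < length xs" "y = xs ! j" using sx(3) by (metis IntD1 in_set_conv_nth)
        have "j < i"
        proof (rule ccontr)
          assume "\<not> j < i"
          hence "xs ! i \<le> xs ! j" using sorted_nth_mono[OF sx(1)] j by simp
          thus False using y j lt by auto
        qed
        thus "y \<in> (\<lambda>j. xs ! j) ` {..<i}" using j by auto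
      qed
      hence "card (A \<inter> {..?b}) \<le> card ((\<lambda>j. xs ! j) ` {..<i})" by (rule card_mono[rotated]) simp
      also have "\<dots> \<le> i" using card_image_le[of "{..<i}" "\<lambda>j. xs ! j"] by simp
      finally show False using c by simp
    qed
  qed
  thus ?thesis using fa fb cab by (simp add: shift_prec_def xs_def ys_def)
qed

lemma nat_ivt:
  fixes f :: "nat \<Rightarrow> nat"
  assumes st: "\<And>s. f (Suc s) \<le> f s + 1" and "u \<le> N" and fu: "f u \<le> m" and "m \<le> f N"
  shows "\<exists>t. u \<le> t \<and> t \<le> N \<and> f t = m"
  using assms(2,4)
proof (induction N)
  case 0
  then show ?case using fu by auto
next
  case (Suc N)
  show ?case
  proof (cases "u = Suc N")
    case True
    then show ?thesis using fu Suc.prems by auto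
  next
    case False
    hence uN: "u \<le> N" using Suc.prems by simp
    show ?thesis
    proof (cases "m \<le> f N")
      case True
      then show ?thesis using Suc.IH uN by (meson le_SucI)
    next
      case False
      hence "f (Suc N) = m" using st[of N] Suc.prems by simp
      then show ?thesis using uN by (intro exI[of _ "Suc N"]) auto
    qed
  qed
qed

lemma pG_key:
  assumes fin: "finite X" and cX: "card X = l" and kd: "k = l + d"
  shows "pG k l X \<le> l" "card (X \<inter> {1..2*pG k l X+d}) = pG k l X"
    "\<And>q. pG k l X < q \<Longrightarrow> q \<le> l \<Longrightarrow> card (X \<inter> {1..2*q+d}) < q"
proof -
  let ?P = "{p. p \<le> l \<and> p \<le> card (X \<inter> {1..2*p+k-l})}"
  have finP: "finite ?P" by (rule finite_subset[of _ "{..l}"]) auto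
  have ne: "0 \<in> ?P" by simp
  have pd: "pG k l X = Max ?P" by (simp add: pG_def)
  have "?P \<noteq> {}" using ne by blast
  hence "Max ?P \<in> ?P" by (rule Max_in[OF finP])
  hence inP: "pG k l X \<in> ?P" using pd by simp
  show 1: "pG k l X \<le> l" using inP by simp
  have ge: "pG k l X \<le> card (X \<inter> {1..2*pG k l X+d})" using inP kd by simp
  have M: "card (X \<inter> {1..2*q+d}) < q" if "pG k l X < q" "q \<le> l" for q
  proof (rule ccontr)
    assume "\<not> ?thesis" then have "q \<in> ?P" using that kd by simp
    then have "q \<le> pG k l X" using Max_ge[OF finP] pd by auto
    thus False using that by simp
  qed
  thus "\<And>q. pG k l X < q \<Longrightarrow> q \<le> l \<Longrightarrow> card (X \<inter> {1..2*q+d}) < q" by blast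
  show "card (X \<inter> {1..2*pG k l X+d}) = pG k l X"
  proof (cases "pG k l X < l")
    case True
    have "card (X \<inter> {1..2*pG k l X+d}) \<le> card (X \<inter> {1..2*(pG k l X+1)+d})"
      by (rule card_mono) (auto simp: fin)
    also have "\<dots> < pG k l X + 1" using M[of "pG k l X + 1"] True by simp
    finally show ?thesis using ge by simp
  next
    case False
    hence "pG k l X = l" using 1 by simp
    moreover have "card (X \<inter> {1..2*pG k l X+d}) \<le> card X" by (rule card_mono) (auto simp: fin)
    ultimately show ?thesis using ge cX by simp
  qed
qed

lemma card_phi:
  assumes fin: "finite X" and cX: "card X = l" and pl: "p \<le> l" and c: "card (X \<inter> {1..2*p+d}) = p"
  shows "card ((X - {1..2*p+d}) \<union> ({1..2*p+d} - X)) = l + d"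
proof -
  have a: "card (X - {1..2*p+d}) = l - p" using assms by (simp add: card_Diff_subset_Int)
  have b: "card ({1..2*p+d} - X) = p + d" using c card_Diff_subset_Int[of "{1..2*p+d}" X]
    by (simp add: Int_commute)
  have "card ((X - {1..2*p+d}) \<union> ({1..2*p+d} - X)) = card (X - {1..2*p+d}) + card ({1..2*p+d} - X)"
    by (rule card_Un_disjoint) (auto simp: fin)
  thus ?thesis using a b pl by simp
qed

lemma phi_count:
  assumes fin: "finite X" and c: "card (X \<inter> {1..2*p+d}) = p" and pq: "p \<le> q"
  shows "card (((X - {1..2*p+d}) \<union> ({1..2*p+d} - X)) \<inter> {1..2*q+d})
     = p + d + card (X \<inter> {1..2*q+d}) - p"
    and "p \<le> card (X \<inter> {1..2*q+d})"
proof -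
  let ?S = "{1..2*p+d}"
  have eq: "((X - ?S) \<union> (?S - X)) \<inter> {1..2*q+d} = (?S - X) \<union> (X \<inter> {1..2*q+d} - ?S)"
    using pq by auto
  have b: "card (?S - X) = p + d" using c card_Diff_subset_Int[of ?S X]
    by (simp add: Int_commute)
  have ii: "X \<inter> {1..2*q+d} \<inter> ?S = X \<inter> ?S" using pq by auto
  have d2: "card (X \<inter> {1..2*q+d} - ?S) = card (X \<inter> {1..2*q+d}) - p"
    using card_Diff_subset_Int[of "X \<inter> {1..2*q+d}" ?S] ii c fin by simp
  have "card (X \<inter> ?S) \<le> card (X \<inter> {1..2*q+d})" by (rule card_mono) (use pq fin in auto)
  thus ge: "p \<le> card (X \<inter> {1..2*q+d})" using c by simp
  have "card ((?S - X) \<union> (X \<inter> {1..2*q+d} - ?S)) = card (?S - X) + card (X \<inter> {1..2*q+d} - ?S)"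
    by (rule card_Un_disjoint) (auto simp: fin)
  thus "card (((X - ?S) \<union> (?S - X)) \<inter> {1..2*q+d}) = p + d + card (X \<inter> {1..2*q+d}) - p"
    using eq b d2 ge by simp
qed


lemma exists_A:
  assumes sub: "X \<subseteq> {1..n}" and fin: "finite X" and cX: "card X = l" and pl: "p \<le> l"
    and c: "card (X \<inter> {1..2*p+d}) = p"
    and M: "\<And>q. p < q \<Longrightarrow> q \<le> l \<Longrightarrow> card (X \<inter> {1..2*q+d}) < q"
    and nb: "l + d + l \<le> n"
  shows "\<exists>A. A \<subseteq> {1..n} \<and> card A = l + d \<and> A \<inter> X = {}
     \<and> shift_prec A ((X - {1..2*p+d}) \<union> ({1..2*p+d} - X))"
proof -
  define u where "u = 2*p+d"
  define H where "H = (X - {1..u}) \<union> ({1..u} - X)"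
  define c where "c s = card ({u<..s} - X)" for s
  have XS: "card (X - {1..u}) = l - p" using fin cX c by (simp add: card_Diff_subset_Int u_def)
  have SX: "card ({1..u} - X) = p + d" using c card_Diff_subset_Int[of "{1..u}" X]
    by (simp add: Int_commute u_def)
  have cs: "c (Suc s) \<le> c s + 1" for s
  proof -
    have "{u<..Suc s} - X \<subseteq> insert (Suc s) ({u<..s} - X)" by auto
    hence "c (Suc s) \<le> card (insert (Suc s) ({u<..s} - X))" unfolding c_def
      by (rule card_mono[rotated]) simp
    also have "\<dots> \<le> c s + 1" unfolding c_def by (simp add: card_insert_if)
    finally show ?thesis .
  qed
  have cu: "c u = 0" by (simp add: c_def)
  have split: "card (X \<inter> {u<..s}) + c s = s - u" for s
  proof -
    have "card ({u<..s} - X) = card {u<..s} - card ({u<..s} \<inter> X)"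
      by (simp add: card_Diff_subset_Int)
    moreover have "card ({u<..s} \<inter> X) \<le> card {u<..s}" by (rule card_mono) auto
    ultimately show ?thesis by (simp add: c_def Int_commute)
  qed
  have gle: "card (X \<inter> {u<..s}) \<le> l - p" for s
  proof -
    have "X \<inter> {u<..s} \<subseteq> X - {1..u}" by auto
    hence "card (X \<inter> {u<..s}) \<le> card (X - {1..u})" by (rule card_mono[rotated]) (simp add: fin)
    thus ?thesis using XS by simp
  qed
  have uN: "u \<le> 2*l+d" using pl by (simp add: u_def)
  have cN: "l - p \<le> c (2*l+d)" using split[of "2*l+d"] gle[of "2*l+d"] pl by (simp add: u_def)
  obtain t where t: "u \<le> t" "t \<le> 2*l+d" "c t = l - p"
    using nat_ivt[of c u "2*l+d" "l-p", OF cs uN] cu cN by auto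
  define A where "A = ({1..u} - X) \<union> ({u<..t} - X)"
  have Asub: "A \<subseteq> {1..n}" using t nb uN by (auto simp: A_def)
  have cA: "card A = l + d"
  proof -
    have "card A = card ({1..u} - X) + card ({u<..t} - X)" unfolding A_def
      by (rule card_Un_disjoint) auto
    thus ?thesis using SX t pl by (simp add: c_def)
  qed
  have AX: "A \<inter> X = {}" by (auto simp: A_def)
  have cH: "card H = l + d" unfolding H_def u_def by (rule card_phi[OF fin cX pl c])
  have finH: "finite H" by (simp add: H_def fin)
  have key: "card (H \<inter> {..s}) \<le> card (A \<inter> {..s})" for s
  proof (cases "s \<le> u")
    case True
    have "H \<inter> {..s} = A \<inter> {..s}" using True sub by (auto simp: H_def A_def)
    thus ?thesis by simp
  next
    case False
    let ?g = "card (X \<inter> {u<..s})"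
    have "H \<inter> {..s} = ({1..u} - X) \<union> (X \<inter> {u<..s})" using False sub by (auto simp: H_def)
    moreover have "card (({1..u} - X) \<union> (X \<inter> {u<..s})) = card ({1..u} - X) + ?g"
      by (rule card_Un_disjoint) (auto simp: fin)
    ultimately have h: "card (H \<inter> {..s}) = p + d + ?g" using SX by simp
    have "A \<inter> {..s} = ({1..u} - X) \<union> ({u<..min s t} - X)" using False by (auto simp: A_def)
    moreover have "card (({1..u} - X) \<union> ({u<..min s t} - X)) = card ({1..u} - X) + c (min s t)"
      unfolding c_def by (rule card_Un_disjoint) auto
    ultimately have a: "card (A \<inter> {..s}) = p + d + c (min s t)" using SX by simp
    have "?g \<le> c (min s t)"
    proof (cases "s \<le> t")
      case True
      define j where "j = (s - u + 1) div 2"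
      have j1: "1 \<le> j" using False by (simp add: j_def)
      have jl: "p + j \<le> l" using True t(2) False by (simp add: j_def u_def)
      have "card (X \<inter> {1..2*(p+j)+d}) < p + j" using M[of "p+j"] j1 jl by simp
      moreover have "(X \<inter> {1..u}) \<union> (X \<inter> {u<..s}) \<subseteq> X \<inter> {1..2*(p+j)+d}"
        using False by (auto simp: j_def u_def)
      moreover have "card ((X \<inter> {1..u}) \<union> (X \<inter> {u<..s})) = card (X \<inter> {1..u}) + ?g"
        by (rule card_Un_disjoint) (auto simp: fin)
      ultimately have "p + ?g < p + j"
        using card_mono[of "X \<inter> {1..2*(p+j)+d}" "(X \<inter> {1..u}) \<union> (X \<inter> {u<..s})"] fin c
        by (simp add: u_def)
      hence "2 * ?g < s - u" by (simp add: j_def)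
      thus ?thesis using split[of s] True by simp
    next
      case False
      thus ?thesis using t(3) gle[of s] by simp
    qed
    thus ?thesis using h a by simp
  qed
  have "shift_prec A H"
    by (rule shift_crit) (use Asub cA cH finH key in \<open>auto intro: finite_subset\<close>)
  thus ?thesis using Asub cA AX by (auto simp: H_def u_def)
qed


theorem lemma5p1:
  fixes n k l :: nat and F G :: "nat set set"
  assumes "1 \<le> l" and "l \<le> k" and "k + l \<le> n"
    and "F \<subseteq> rsets n k" and "G \<subseteq> rsets n l"
    and "initial n k F" and "initial n l G"
    and "cross_intersecting F G"
    and "k = l \<Longrightarrow> (\<forall>B\<in>G. pG k l B \<ge> 1)"
  shows "(\<forall>B\<in>G. card (phi k l B) = k)
    \<and> inj_on (phi k l) G \<and> (\<forall>B\<in>G. phi k l B \<notin> F)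
    \<and> (\<forall>B\<in>G. B \<noteq> {1..l} \<longrightarrow> phi k l B \<inter> {1..l} \<noteq> {})"
proof -
  obtain d where kd: "k = l + d" using assms(2) le_Suc_ex by blast
  have mem: "finite X \<and> X \<subseteq> {1..n} \<and> card X = l" if "X \<in> G" for X
    using assms(5) that by (auto simp: rsets_def intro: finite_subset)
  have ph: "phi k l X = (X - {1..2*pG k l X+d}) \<union> ({1..2*pG k l X+d} - X)" for X
    by (simp add: phi_def Let_def kd)
  have C1: "card (phi k l X) = k" if "X \<in> G" for X
    using mem[OF that] pG_key[of X l k d] kd card_phi[of X l "pG k l X" d] by (subst ph) simp
  have inj: "inj_on (phi k l) G"
  proof (rule inj_onI)
    fix X Y assume X: "X \<in> G" and Y: "Y \<in> G" and e: "phi k l X = phi k l Y"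
    have gen: False if A: "A \<in> G" and B: "B \<in> G" and e2: "phi k l A = phi k l B"
      and lt: "pG k l A < pG k l B" for A B
    proof -
      let ?p = "pG k l A" and ?q = "pG k l B"
      have fa: "finite A" "card A = l" and fb: "finite B" "card B = l" using mem A B by auto
      note kA = pG_key[OF fa kd] and kB = pG_key[OF fb kd]
      have qa: "?q \<le> l" using kB by simp
      have "card (A \<inter> {1..2*?q+d}) < ?q" using kA(3)[OF lt qa] .
      hence c1: "card (phi k l A \<inter> {1..2*?q+d}) < ?q + d"
        using phi_count[of A ?p d ?q] kA fa lt by (subst ph) simp
      have c2: "card (phi k l B \<inter> {1..2*?q+d}) = ?q + d"
        using phi_count[of B ?q d ?q] kB fb by (subst ph) simp
      show False using c1 c2 e2 by simp
    qed
    have peq: "pG k l X = pG k l Y"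
      using gen[OF X Y e] gen[OF Y X e[symmetric]] by (meson linorder_neqE_nat)
    show "X = Y"
    proof -
      have "X = (phi k l X - {1..2*pG k l X+d}) \<union> ({1..2*pG k l X+d} - phi k l X)"
        by (auto simp: ph)
      also have "\<dots> = (phi k l Y - {1..2*pG k l Y+d}) \<union> ({1..2*pG k l Y+d} - phi k l Y)"
        using e peq by simp
      also have "\<dots> = Y" by (auto simp: ph)
      finally show ?thesis .
    qed
  qed
  have C2: "phi k l X \<notin> F" if X: "X \<in> G" for X
  proof
    assume inF: "phi k l X \<in> F"
    note kX = pG_key[of X l k d]
    have fx: "finite X" "X \<subseteq> {1..n}" "card X = l" using mem X by auto
    obtain A where A: "A \<subseteq> {1..n}" "card A = l + d" "A \<inter> X = {}"
      "shift_prec A ((X - {1..2*pG k l X+d}) \<union> ({1..2*pG k l X+d} - X))"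
      using exists_A[OF fx(2) fx(1) fx(3), of "pG k l X" d] kX fx kd assms(3) by auto
    have "A \<in> rsets n k" using A kd by (simp add: rsets_def)
    hence "A \<in> F" using assms(6) inF A(4) by (auto simp: initial_def ph)
    thus False using assms(8) X A(3) by (auto simp: cross_intersecting_def)
  qed
  have C3: "phi k l X \<inter> {1..l} \<noteq> {}" if X: "X \<in> G" and ne: "X \<noteq> {1..l}" for X
  proof
    assume emp: "phi k l X \<inter> {1..l} = {}"
    note kX = pG_key[of X l k d]
    have fx: "finite X" "X \<subseteq> {1..n}" "card X = l" using mem X by auto
    let ?p = "pG k l X"
    show False
    proof (cases "l \<le> 2*?p+d")
      case True
      have "{1..l} \<subseteq> X"
      proof
        fix x assume x: "x \<in> {1..l}"
        hence "x \<in> {1..2*?p+d}" using True by simp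
        moreover have "x \<notin> phi k l X" using emp x by blast
        ultimately show "x \<in> X" unfolding ph by blast
      qed
      hence "{1..l} = X" using fx by (intro card_subset_eq) auto
      thus False using ne by simp
    next
      case False
      have "1 \<le> ?p + d"
      proof (cases "d = 0")
        case True thus ?thesis using assms(9) kd X by auto
      qed simp
      moreover have "card ({1..2*?p+d} - X) = ?p + d"
        using kX fx kd card_Diff_subset_Int[of "{1..2*?p+d}" X] by (simp add: Int_commute)
      ultimately obtain x where "x \<in> {1..2*?p+d} - X"
        by (metis card.empty ex_in_conv not_one_le_zero)
      hence "x \<in> phi k l X \<inter> {1..l}" using False unfolding ph by auto
      thus False using emp by blast
    qed
  qed
  show ?thesis using C1 inj C2 C3 by blast
qed

end
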